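(* Let $v\ge 0$. The optimal value of $$\min_{y\in\mathbb{R}^{n^+}}\ \sum_{j=1}^{n^+} y_j^{1/\alpha}\quad\text{s.t.}\quad 0\le y_1\le\cdots\le y_{n^+},\qquad \sum_{j=1}^{n^+} h^+_j y_j=v$$ equals $$v^{1/\alpha}\cdot\frac{J}{\left[\left(\sum_{j=1}^{J}h^+_j\right)^{\frac{1}{1-\alpha}}+\sum_{j=J+1}^{n^+}\left(J^{\alpha}h^+_j\right)^{\frac{1}{1-\alpha}}\right]^{\frac{1-\alpha}{\alpha}}},$$ where $J$ is the transitional index.
   Context: Fix $N\in\mathbb{N}$, $\alpha\in(0,1)$ and an integer $1\le n^+\le N$. A function $f:[0,1]\to\mathbb{R}$ is inverse S-shaped if it is strictly increasing, continuously differentiable, and there is $x_0\in[0,1]$ such that $f'$ is strictly decreasing on $[0,x_0]$ and strictly increasing on $[x_0,1]$. Let $W^+:[0,1]\to[0,1]$ be inverse S-shaped with $W^+(0)=0$, $W^+(1)=1$. Decision weights: $h^+_j:=W^+\!\left(\frac{n^+-j+1}{N}\right)-W^+\!\left(\frac{n^+-j}{N}\right)$ for $j=1,\dots,n^+$. The transitional index is $J:=\min\{j\in\{1,\dots,n^+\}: j\,h^+_{j+1}\ge \sum_{j'=1}^{j}h^+_{j'}\}$, with the convention $h^+_{n^++1}=\infty$. *)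

theory Defs
  imports "HOL-Analysis.Analysis"
begin

definition inverse_S_shaped :: "(real \<Rightarrow> real) \<Rightarrow> bool" where
  "inverse_S_shaped f \<longleftrightarrow>
     strict_mono_on {0..1} f \<and>
     (\<exists>f'. (\<forall>x\<in>{0..1}. (f has_real_derivative f' x) (at x within {0..1})) \<and>
           continuous_on {0..1} f' \<and>
           (\<exists>x0\<in>{0..1}. strict_antimono_on {0..x0} f' \<and> strict_mono_on {x0..1} f'))"

definition hplus :: "(real \<Rightarrow> real) \<Rightarrow> nat \<Rightarrow> nat \<Rightarrow> nat \<Rightarrow> real" where
  "hplus W N np j = W ((real np - real j + 1) / real N) - W ((real np - real j) / real N)"

text \<open>Transitional index; the convention h_{np+1} = \<infinity> makes the condition true at j = np.\<close>
definition trans_index :: "(real \<Rightarrow> real) \<Rightarrow> nat \<Rightarrow> nat \<Rightarrow> nat" where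
  "trans_index W N np = (LEAST j. 1 \<le> j \<and> j \<le> np \<and>
      (j = np \<or> real j * hplus W N np (j + 1) \<ge> (\<Sum>j'=1..j. hplus W N np j')))"

definition feasible :: "(real \<Rightarrow> real) \<Rightarrow> nat \<Rightarrow> nat \<Rightarrow> real \<Rightarrow> (nat \<Rightarrow> real) set" where
  "feasible W N np v = {y. 0 \<le> y 1 \<and> (\<forall>j\<in>{1..<np}. y j \<le> y (j + 1)) \<and>
      (\<Sum>j=1..np. hplus W N np j * y j) = v}"

definition objective :: "real \<Rightarrow> nat \<Rightarrow> (nat \<Rightarrow> real) \<Rightarrow> real" where
  "objective \<alpha> np y = (\<Sum>j=1..np. y j powr (1 / \<alpha>))"

end

theory Submission imports Defs begin

lemma tangent_powr:
  fixes x c p :: real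
  assumes "p > 1" "0 \<le> x" "0 \<le> c"
  shows "c powr p + p * c powr (p-1) * (x - c) \<le> x powr p"
proof -
  define r where "r = p/(p-1)"
  have r1: "r > 1" using assms(1) by (simp add: r_def field_simps)
  have pr: "1/p + 1/r = 1" using assms(1) by (simp add: r_def field_simps)
  have y: "x * c powr (p-1) \<le> x powr p / p + (c powr (p-1)) powr r / r"
    using Youngs_inequality[OF assms(1) r1 pr assms(2)] by simp
  have e: "(c powr (p-1)) powr r = c powr p"
    using assms(1) by (simp add: powr_powr r_def)
  have cc: "c powr p = c * c powr (p-1)"
  proof (cases "c = 0")
    case True then show ?thesis using assms(1) by simp
  next
    case False then have "c > 0" using assms(3) by simp
    then show ?thesis by (simp add: powr_mult_base)
  qed
  have ir: "1/r = (p-1)/p" using assms(1) by (simp add: r_def)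
  have cr: "c powr p / r = c powr p * ((p-1)/p)"
  proof -
    have "c powr p / r = c powr p * (1/r)" by simp
    also have "\<dots> = c powr p * ((p-1)/p)" by (simp only: ir)
    finally show ?thesis .
  qed
  from y e have "x * c powr (p-1) \<le> x powr p / p + c powr p * ((p-1)/p)"
    by (simp only: cr)
  then have "p * (x * c powr (p-1)) \<le> x powr p + c powr p * (p-1)"
    using assms(1) by (simp add: field_simps)
  then show ?thesis using cc by (simp add: algebra_simps)
qed

lemma S_sign:
  fixes f' :: "real \<Rightarrow> real"
  assumes x0: "x0 \<in> {0..1}" "strict_antimono_on {0..x0} f'" "strict_mono_on {x0..1} f'"
    and d: "\<delta> > 0" and st: "0 \<le> s" "s < t" "t + \<delta> \<le> 1"
    and ps: "f' (s+\<delta>) - f' s \<ge> 0"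
  shows "f' (t+\<delta>) - f' t > 0"
proof (cases "x0 \<le> s")
  case True
  then have "f' t < f' (t+\<delta>)" using x0(3) d st by (intro strict_mono_onD[OF x0(3)]) auto
  then show ?thesis by simp
next
  case False
  have "x0 < s + \<delta>"
  proof (rule ccontr)
    assume "\<not> x0 < s + \<delta>"
    then have "f' (s+\<delta>) < f' s" using x0 d st False
      by (intro monotone_onD[OF x0(2)]) auto
    then show False using ps by simp
  qed
  show ?thesis
  proof (cases "x0 \<le> t")
    case True
    then have "f' t < f' (t+\<delta>)" using x0(3) d st by (intro strict_mono_onD[OF x0(3)]) auto
    then show ?thesis by simp
  next
    case False
    have "f' t < f' s" using False st x0 by (intro monotone_onD[OF x0(2)]) auto
    moreover have "f' (s+\<delta>) < f' (t+\<delta>)" using \<open>x0 < s + \<delta>\<close> st x0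
      by (intro strict_mono_onD[OF x0(3)]) auto
    ultimately show ?thesis using ps by simp
  qed
qed

lemma psi_mvt:
  fixes W f' :: "real \<Rightarrow> real"
  assumes der: "\<forall>x\<in>{0..1}. (W has_real_derivative f' x) (at x within {0..1})"
    and d: "\<delta> > 0" and ab: "0 \<le> a" "a < b" "b + \<delta> \<le> 1"
  shows "\<exists>z. a < z \<and> z < b \<and>
     (W (b+\<delta>) - W b) - (W (a+\<delta>) - W a) = (b - a) * (f' (z+\<delta>) - f' z)"
proof -
  let ?g = "\<lambda>x. W (x+\<delta>) - W x"
  have cW: "continuous_on {0..1} W"
    using der by (intro DERIV_continuous_on) auto
  have c1: "continuous_on {a..b} (\<lambda>x. W (x+\<delta>))"
    by (rule continuous_on_compose2[OF cW]) (use ab d in \<open>auto intro!: continuous_intros\<close>)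
  have c2: "continuous_on {a..b} W" by (rule continuous_on_subset[OF cW]) (use ab d in auto)
  have cg: "continuous_on {a..b} ?g" using c1 c2 by (intro continuous_on_diff)
  have dat: "(W has_real_derivative f' x) (at x)" if "0 < x" "x < 1" for x
  proof -
    have "x \<in> interior {0..1::real}" using that by simp
    then have e: "at x within {0..1} = at x" by (rule at_within_interior)
    have "(W has_real_derivative f' x) (at x within {0..1})" using der that by auto
    then show ?thesis using e by simp
  qed
  have dg: "(?g has_real_derivative (f' (x+\<delta>) - f' x)) (at x)" if "a < x" "x < b" for x
  proof -
    have "(W has_real_derivative f' (x+\<delta>)) (at (x+\<delta>))" using dat[of "x+\<delta>"] that ab d by auto
    then have "((\<lambda>x. W (x+\<delta>)) has_real_derivative f' (x+\<delta>)) (at x)" by (simp add: DERIV_shift)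
    then show ?thesis using dat[of x] that ab d by (intro derivative_intros) auto
  qed
  obtain l z where z: "a < z" "z < b" "DERIV ?g z :> l" "?g b - ?g a = (b - a) * l"
    using MVT[OF ab(2) cg] dg by (meson real_differentiable_def)
  have "l = f' (z+\<delta>) - f' z" using DERIV_unique[OF z(3) dg[OF z(1,2)]] .
  then show ?thesis using z by auto
qed

lemma S_qc:
  fixes W :: "real \<Rightarrow> real"
  assumes S: "inverse_S_shaped W" and d: "\<delta> > 0" and abc: "0 \<le> a" "a < b" "b < c" "c + \<delta> \<le> 1"
  shows "W (b+\<delta>) - W b < max (W (a+\<delta>) - W a) (W (c+\<delta>) - W c)"
proof -
  obtain f' x0 where der: "\<forall>x\<in>{0..1}. (W has_real_derivative f' x) (at x within {0..1})"
    and x0: "x0\<in>{0..1}" "strict_antimono_on {0..x0} f'" "strict_mono_on {x0..1} f'"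
    using S unfolding inverse_S_shaped_def by blast
  obtain z1 where z1: "a < z1" "z1 < b"
     "(W (b+\<delta>) - W b) - (W (a+\<delta>) - W a) = (b - a) * (f' (z1+\<delta>) - f' z1)"
    using psi_mvt[OF der d abc(1,2)] abc by auto
  obtain z2 where z2: "b < z2" "z2 < c"
     "(W (c+\<delta>) - W c) - (W (b+\<delta>) - W b) = (c - b) * (f' (z2+\<delta>) - f' z2)"
    using psi_mvt[OF der d, of b c] abc by auto
  show ?thesis
  proof (rule ccontr)
    assume "\<not> ?thesis"
    then have h1: "W (b+\<delta>) - W b \<ge> W (a+\<delta>) - W a" and h2: "W (b+\<delta>) - W b \<ge> W (c+\<delta>) - W c"
      by auto
    have "f' (z1+\<delta>) - f' z1 \<ge> 0"
    proof (rule ccontr)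
      assume "\<not> ?thesis"
      then have "(b - a) * (f' (z1+\<delta>) - f' z1) < 0" using abc by (simp add: mult_pos_neg)
      then show False using z1(3) h1 by linarith
    qed
    then have "f' (z2+\<delta>) - f' z2 > 0"
      using S_sign[OF x0 d, of z1 z2] z1 z2 abc by auto
    then have "(c - b) * (f' (z2+\<delta>) - f' z2) > 0" using abc by simp
    then show False using z2(3) h2 by linarith
  qed
qed


lemma sum_split_at:
  fixes f :: "nat \<Rightarrow> real"
  assumes "J \<le> n"
  shows "(\<Sum>j=1..n. f j) = (\<Sum>j=1..J. f j) + (\<Sum>j=J+1..n. f j)"
proof -
  have "{1..n} = {1..J} \<union> {J+1..n}" using assms by auto
  moreover have "{1..J} \<inter> {J+1..n} = {}" by auto
  ultimately show ?thesis by (simp add: sum.union_disjoint)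
qed

lemma abel_ge:
  fixes d y :: "nat \<Rightarrow> real"
  assumes D: "\<And>k. k < J \<Longrightarrow> (\<Sum>i=1..k. d i) \<le> 0"
    and y: "\<And>i. 1 \<le> i \<Longrightarrow> i < J \<Longrightarrow> y i \<le> y (i+1)"
  shows "k \<le> J \<Longrightarrow> (\<Sum>i=1..k. d i) * y k \<le> (\<Sum>i=1..k. d i * y i)"
proof (induction k)
  case 0 then show ?case by simp
next
  case (Suc k)
  have IH: "(\<Sum>i=1..k. d i) * y k \<le> (\<Sum>i=1..k. d i * y i)" using Suc by simp
  have m: "(\<Sum>i=1..k. d i) * y (k+1) \<le> (\<Sum>i=1..k. d i) * y k"
  proof (cases "k = 0")
    case True then show ?thesis by simp
  next
    case False
    then have "y k \<le> y (k+1)" using y Suc.prems by simp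
    moreover have "(\<Sum>i=1..k. d i) \<le> 0" using D Suc.prems by simp
    ultimately show ?thesis by (simp add: mult_left_mono_neg)
  qed
  have "(\<Sum>i=1..Suc k. d i) * y (Suc k) = (\<Sum>i=1..k. d i) * y (k+1) + d (k+1) * y (k+1)"
    by (simp add: algebra_simps)
  also have "\<dots> \<le> (\<Sum>i=1..k. d i * y i) + d (k+1) * y (k+1)" using IH m by simp
  also have "\<dots> = (\<Sum>i=1..Suc k. d i * y i)" by simp
  finally show ?case .
qed


theorem corollary1:
  fixes N np :: nat and \<alpha> v :: real and W :: "real \<Rightarrow> real"
  assumes "0 < \<alpha>" "\<alpha> < 1" "1 \<le> np" "np \<le> N"
    and "inverse_S_shaped W" "W 0 = 0" "W 1 = 1"
    and "0 \<le> v"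
  defines "h \<equiv> hplus W N np" and "J \<equiv> trans_index W N np"
  defines "val \<equiv> v powr (1 / \<alpha>) * real J /
      ((((\<Sum>j=1..J. h j) powr (1 / (1 - \<alpha>))) +
        (\<Sum>j=J+1..np. (real J powr \<alpha> * h j) powr (1 / (1 - \<alpha>)))) powr ((1 - \<alpha>) / \<alpha>))"
  shows "(\<exists>y\<in>feasible W N np v. objective \<alpha> np y = val) \<and>
         (\<forall>y\<in>feasible W N np v. val \<le> objective \<alpha> np y)"
proof -
  have smono: "strict_mono_on {0..1} W" using assms(5) unfolding inverse_S_shaped_def by blast
  have Npos: "real N > 0" using assms(3,4) by simp
  have hpos: "h j > 0" if "1 \<le> j" "j \<le> np" for j
  proof -
    have "W ((real np - real j) / real N) < W ((real np - real j + 1) / real N)"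
      using that assms(4) Npos
      by (intro monotone_onD[OF smono]) (auto simp: divide_simps)
    then show ?thesis by (simp add: h_def hplus_def)
  qed
  have hqc: "h j < max (h (j-1)) (h (j+1))" if j: "2 \<le> j" "j+1 \<le> np" for j
  proof -
    define \<delta> where "\<delta> = 1 / real N"
    define a where "a = (real np - real j - 1) / real N"
    define b where "b = (real np - real j) / real N"
    define c where "c = (real np - real j + 1) / real N"
    have q: "W (b+\<delta>) - W b < max (W (a+\<delta>) - W a) (W (c+\<delta>) - W c)"
      using j assms(4) Npos
      by (intro S_qc[OF assms(5)]) (auto simp: \<delta>_def a_def b_def c_def divide_simps)
    have e1: "h j = W (b+\<delta>) - W b"
      unfolding h_def hplus_def \<delta>_def b_def by (simp add: add_divide_distrib)
    have e2: "h (j+1) = W (a+\<delta>) - W a"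
    proof -
      have "(real np - real (j+1)) / real N = a" by (simp add: a_def)
      moreover have "(real np - real (j+1) + 1) / real N = a + \<delta>"
        by (simp add: a_def \<delta>_def add_divide_distrib[symmetric])
      ultimately show ?thesis unfolding h_def hplus_def by simp
    qed
    have e3: "h (j-1) = W (c+\<delta>) - W c"
    proof -
      have "(real np - real (j-1)) / real N = c" using j by (simp add: c_def of_nat_diff)
      moreover have "(real np - real (j-1) + 1) / real N = c + \<delta>"
        using j by (simp add: c_def \<delta>_def add_divide_distrib[symmetric] of_nat_diff)
      ultimately show ?thesis unfolding h_def hplus_def by simp
    qed
    show ?thesis using q e1 e2 e3 by linarith
  qed
  define H where "H k = (\<Sum>j=1..k. h j)" for k
  define P where "P j = (1 \<le> j \<and> j \<le> np \<and> (j = np \<or> real j * h (j + 1) \<ge> H j))" for j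
  have Jdef: "J = (LEAST j. P j)"
    unfolding J_def trans_index_def P_def H_def h_def by simp
  have Pnp: "P np" using assms(3) by (simp add: P_def)
  have PJ: "P J" unfolding Jdef by (rule LeastI[of P, OF Pnp])
  have J1: "1 \<le> J" and Jnp: "J \<le> np" using PJ by (auto simp: P_def)
  have Jlt: "J < np \<Longrightarrow> real J * h (J+1) \<ge> H J" using PJ by (auto simp: P_def)
  have before: "real k * h (k+1) < H k" if "1 \<le> k" "k < J" for k
  proof -
    have "\<not> P k" using that(2) unfolding Jdef by (rule not_less_Least)
    then show ?thesis using that Jnp by (auto simp: P_def)
  qed
  have Hpos: "H k > 0" if "1 \<le> k" "k \<le> np" for k
    unfolding H_def using that hpos by (intro sum_pos) auto
  have avg0: "k \<le> m \<longrightarrow> m \<le> J \<longrightarrow> real m * H k \<ge> real k * H m" if "1 \<le> k" for k m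
  proof (induction m)
    case 0 then show ?case by simp
  next
    case (Suc m)
    show ?case
    proof (intro impI)
      assume km: "k \<le> Suc m" and mJ: "Suc m \<le> J"
      show "real (Suc m) * H k \<ge> real k * H (Suc m)"
      proof (cases "k = Suc m")
        case True then show ?thesis by simp
      next
        case False
        then have km': "k \<le> m" using km by simp
        have IH: "real m * H k \<ge> real k * H m" using Suc km' mJ by simp
        have m1: "real m \<ge> 1" using km' that by simp
        have b: "real m * h (m+1) < H m" using before[of m] km' that mJ by simp
        have "real k * h (m+1) * real m < real k * H m"
          using b that by (simp add: mult.commute mult.left_commute)
        also have "\<dots> \<le> real m * H k" using IH .
        finally have "real k * h (m+1) < H k" using m1 by (simp add: mult.commute)
        moreover have "H (Suc m) = H m + h (m+1)" by (simp add: H_def)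
        ultimately show ?thesis using IH by (simp add: algebra_simps)
      qed
    qed
  qed
  have avg: "real k * H J \<le> real J * H k" if "k \<le> J" for k
  proof (cases "k = 0")
    case True then show ?thesis by (simp add: H_def)
  next
    case False then show ?thesis using avg0[of k J] that by simp
  qed
  have hJ: "h J \<le> h (J+1)" if "J < np"
  proof (rule ccontr)
    assume "\<not> ?thesis"
    then have lt: "h (J+1) < h J" by simp
    have dec: "m < J \<longrightarrow> h (J+1) < h (J-m) \<and> h (J-m+1) < h (J-m)" for m
    proof (induction m)
      case 0 then show ?case using lt J1 by simp
    next
      case (Suc m)
      show ?case
      proof
        assume m: "Suc m < J"
        have IH: "h (J+1) < h (J-m)" "h (J-m+1) < h (J-m)" using Suc m by auto
        have "h (J-m) < max (h (J-m-1)) (h (J-m+1))"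
          using hqc[of "J-m"] m that by simp
        then have "h (J-m) < h (J-Suc m)" using IH(2) by simp
        moreover have "J - Suc m + 1 = J - m" using m by simp
        ultimately show "h (J+1) < h (J - Suc m) \<and> h (J - Suc m + 1) < h (J - Suc m)"
          using IH(1) by simp
      qed
    qed
    have "h (J+1) < h i" if "i \<in> {1..J}" for i
      using dec[of "J-i"] that by auto
    then have "(\<Sum>i=1..J. h (J+1)) < (\<Sum>i=1..J. h i)"
      using J1 by (intro sum_strict_mono) auto
    then have "real J * h (J+1) < H J" by (simp add: H_def)
    then show False using Jlt that by simp
  qed
  have hmono: "h j \<le> h (j+1)" if "J \<le> j" "j < np" for j
  proof -
    have "\<forall>j. j = J + d \<longrightarrow> j < np \<longrightarrow> h j \<le> h (j+1)" for d
    proof (induction d)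
      case 0 then show ?case using hJ by simp
    next
      case (Suc d)
      show ?case
      proof (intro allI impI)
        fix j assume j: "j = J + Suc d" "j < np"
        have IH: "h (j-1) \<le> h j" using Suc j by simp
        have "h j < max (h (j-1)) (h (j+1))" using hqc[of j] j J1 by simp
        then show "h j \<le> h (j+1)" using IH by simp
      qed
    qed
    then show ?thesis using that le_Suc_ex by blast
  qed
  define A where "A = H J / real J"
  have Apos: "A > 0" using Hpos[OF J1 Jnp] J1 by (simp add: A_def)
  have HJ: "H J = real J * A" using J1 by (simp add: A_def)
  define g where "g j = (if j \<le> J then A else h j)" for j
  have gpos: "g j > 0" if "1 \<le> j" "j \<le> np" for j
    using that Apos hpos by (simp add: g_def)
  have gmono: "g j \<le> g (j+1)" if "1 \<le> j" "j < np" for j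
  proof -
    consider "j < J" | "j = J" | "J < j" by linarith
    then show ?thesis
    proof cases
      case 1 then show ?thesis by (simp add: g_def)
    next
      case 2
      have "real J * h (J+1) \<ge> real J * A" using Jlt that 2 HJ by simp
      then have "h (J+1) \<ge> A" using J1 by simp
      then show ?thesis using 2 by (simp add: g_def)
    next
      case 3 then show ?thesis using hmono[of j] that by (simp add: g_def)
    qed
  qed
  define e where "e = 1 / (1 - \<alpha>)"
  define q where "q = \<alpha> / (1 - \<alpha>)"
  define p where "p = 1 / \<alpha>"
  have e_q: "e = 1 + q" using assms(1,2) by (simp add: e_def q_def field_simps)
  have pq: "q * p = e" using assms(1,2) by (simp add: e_def q_def p_def field_simps)
  have qp1: "q * (p - 1) = 1" using assms(1,2) by (simp add: q_def p_def field_simps)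
  have p1: "p > 1" using assms(1,2) by (simp add: p_def)
  have qpos: "q > 0" using assms(1,2) by (simp add: q_def)
  define M where "M = (\<Sum>j=1..np. g j powr e)"
  have Mpos: "M > 0" unfolding M_def using gpos assms(3) by (intro sum_pos) (auto, metis less_irrefl)
  have hgM: "(\<Sum>j=1..np. h j * g j powr q) = M"
  proof -
    have s1: "(\<Sum>j=1..J. h j * g j powr q) = (\<Sum>j=1..J. g j powr e)"
    proof -
      have "(\<Sum>j=1..J. h j * g j powr q) = (\<Sum>j=1..J. h j * A powr q)"
        by (rule sum.cong) (auto simp: g_def)
      also have "\<dots> = H J * A powr q" by (simp add: H_def sum_distrib_right)
      also have "\<dots> = real J * (A * A powr q)" by (simp add: HJ)
      also have "A * A powr q = A powr e" using Apos by (simp add: e_q powr_add)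
      also have "real J * A powr e = (\<Sum>j=1..J. g j powr e)" by (simp add: g_def)
      finally show ?thesis .
    qed
    have s2: "(\<Sum>j=J+1..np. h j * g j powr q) = (\<Sum>j=J+1..np. g j powr e)"
    proof (rule sum.cong)
      fix j assume j: "j \<in> {J+1..np}"
      then have "g j = h j" by (simp add: g_def)
      moreover have "h j > 0" using hpos j J1 by simp
      ultimately show "h j * g j powr q = g j powr e" by (simp add: e_q powr_add)
    qed simp
    show ?thesis unfolding M_def
      using sum_split_at[OF Jnp, of "\<lambda>j. h j * g j powr q"] sum_split_at[OF Jnp, of "\<lambda>j. g j powr e"]
        s1 s2 by simp
  qed
  define t where "t = v / M"
  have tnn: "t \<ge> 0" using Mpos assms(8) by (simp add: t_def)
  define ys where "ys j = t * g j powr q" for j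
  have ys_feas: "ys \<in> feasible W N np v"
  proof -
    have "0 \<le> ys 1" using tnn by (simp add: ys_def)
    moreover have "ys j \<le> ys (j+1)" if "j \<in> {1..<np}" for j
    proof -
      have "g j powr q \<le> g (j+1) powr q"
        using gmono[of j] gpos[of j] that qpos by (intro powr_mono2) auto
      then show ?thesis using tnn by (simp add: ys_def mult_left_mono)
    qed
    moreover have "(\<Sum>j=1..np. hplus W N np j * ys j) = v"
    proof -
      have "(\<Sum>j=1..np. hplus W N np j * ys j) = t * (\<Sum>j=1..np. h j * g j powr q)"
        by (simp add: ys_def h_def sum_distrib_left algebra_simps)
      also have "\<dots> = v" using hgM Mpos by (simp add: t_def)
      finally show ?thesis .
    qed
    ultimately show ?thesis by (simp add: feasible_def)
  qed
  have obj_ys: "objective \<alpha> np ys = t powr p * M"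
  proof -
    have "objective \<alpha> np ys = (\<Sum>j=1..np. t powr p * g j powr e)"
      unfolding objective_def p_def[symmetric]
    proof (rule sum.cong)
      fix j assume "j \<in> {1..np}"
      then have "g j > 0" using gpos by simp
      then show "ys j powr p = t powr p * g j powr e"
        using tnn by (simp add: ys_def powr_mult powr_powr pq)
    qed simp
    then show ?thesis by (simp add: M_def sum_distrib_left)
  qed
  define S where "S = (H J powr e + (\<Sum>j=J+1..np. (real J powr \<alpha> * h j) powr e))"
  have val_eq: "val = v powr p * real J / S powr (p - 1)"
  proof -
    have "(1 - \<alpha>) / \<alpha> = p - 1" using assms(1) by (simp add: p_def field_simps)
    then show ?thesis unfolding val_def S_def H_def e_def p_def by simp
  qed
  have SM: "S = real J powr q * M"
  proof -
    have Jp: "real J > 0" using J1 by simp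
    have a1: "H J powr e = real J powr q * (real J * A powr e)"
    proof -
      have "H J powr e = real J powr e * A powr e" using Apos Jp by (simp add: HJ powr_mult)
      also have "real J powr e = real J powr q * real J" using Jp by (simp add: e_q powr_add)
      finally show ?thesis by simp
    qed
    have a2: "(\<Sum>j=J+1..np. (real J powr \<alpha> * h j) powr e) = real J powr q * (\<Sum>j=J+1..np. g j powr e)"
      unfolding sum_distrib_left
    proof (rule sum.cong)
      fix j assume j: "j \<in> {J+1..np}"
      then have "h j > 0" using hpos J1 by simp
      moreover have "\<alpha> * e = q" using assms(1,2) by (simp add: e_def q_def)
      ultimately show "(real J powr \<alpha> * h j) powr e = real J powr q * g j powr e"
        using j Jp by (simp add: g_def powr_mult powr_powr)
    qed simp
    have a3: "real J * A powr e = (\<Sum>j=1..J. g j powr e)" by (simp add: g_def)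
    show ?thesis unfolding S_def M_def using a1 a2 a3 sum_split_at[OF Jnp, of "\<lambda>j. g j powr e"]
      by (simp add: algebra_simps)
  qed
  have val2: "val = t powr p * M"
  proof -
    have Jp: "real J > 0" using J1 by simp
    have "S powr (p - 1) = real J * M powr (p-1)"
      using Jp Mpos by (simp add: SM powr_mult powr_powr qp1)
    then have "val = v powr p / M powr (p - 1)" using val_eq Jp by simp
    also have "\<dots> = t powr p * M"
      using Mpos assms(8) by (simp add: t_def powr_divide powr_diff field_simps)
    finally show ?thesis .
  qed
  have lower: "val \<le> objective \<alpha> np y" if y: "y \<in> feasible W N np v" for y
  proof -
    have y1: "0 \<le> y 1" and ym: "\<And>j. j \<in> {1..<np} \<Longrightarrow> y j \<le> y (j+1)"
      and yv: "(\<Sum>j=1..np. h j * y j) = v"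
      using y by (auto simp: feasible_def h_def)
    have ynn0: "1 \<le> j \<longrightarrow> j \<le> np \<longrightarrow> 0 \<le> y j" for j
    proof (induction j)
      case 0 then show ?case by simp
    next
      case (Suc m) then show ?case using y1 ym[of m] by (cases "m = 0") auto
    qed
    have ynn: "0 \<le> y j" if "1 \<le> j" "j \<le> np" for j using ynn0 that by simp
    have tang: "ys j powr p + p * (t powr (p-1) * g j) * (y j - ys j) \<le> y j powr p"
      if "j \<in> {1..np}" for j
    proof -
      have gj: "g j > 0" using gpos that by simp
      have "ys j powr (p-1) = t powr (p-1) * g j"
        using tnn gj by (simp add: ys_def powr_mult powr_powr qp1)
      moreover have "ys j \<ge> 0" using tnn by (simp add: ys_def)
      ultimately show ?thesis using tangent_powr[OF p1, of "y j" "ys j"] ynn that by simp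
    qed
    have gy: "(\<Sum>j=1..np. g j * ys j) = v"
    proof -
      have "(\<Sum>j=1..np. g j * ys j) = t * M" unfolding M_def sum_distrib_left
      proof (rule sum.cong)
        fix j assume "j \<in> {1..np}"
        then have "g j > 0" using gpos by simp
        then show "g j * ys j = t * g j powr e" by (simp add: ys_def e_q powr_add)
      qed simp
      then show ?thesis using Mpos by (simp add: t_def)
    qed
    have abel: "0 \<le> (\<Sum>j=1..J. (A - h j) * y j)"
    proof -
      have D: "(\<Sum>i=1..k. A - h i) \<le> 0" if "k < J" for k
      proof -
        have "real k * H J \<le> real J * H k" using avg that by simp
        then have "real k * A \<le> H k" using J1 by (simp add: A_def field_simps)
        then show ?thesis by (simp add: sum_subtractf H_def)
      qed
      have "(\<Sum>i=1..J. A - h i) * y J \<le> (\<Sum>i=1..J. (A - h i) * y i)"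
        using abel_ge[of J "\<lambda>i. A - h i" y J] D ym Jnp by auto
      moreover have "(\<Sum>i=1..J. A - h i) = 0" using HJ by (simp add: sum_subtractf H_def)
      ultimately show ?thesis by simp
    qed
    have gy2: "(\<Sum>j=1..np. g j * y j) = v + (\<Sum>j=1..J. (A - h j) * y j)"
    proof -
      have "(\<Sum>j=1..np. g j * y j) = (\<Sum>j=1..np. h j * y j) + (\<Sum>j=1..np. (g j - h j) * y j)"
        by (simp add: algebra_simps sum.distrib[symmetric])
      moreover have "(\<Sum>j=1..np. (g j - h j) * y j) = (\<Sum>j=1..J. (A - h j) * y j)"
      proof -
        have "(\<Sum>j=J+1..np. (g j - h j) * y j) = 0" by (rule sum.neutral) (auto simp: g_def)
        moreover have "(\<Sum>j=1..J. (g j - h j) * y j) = (\<Sum>j=1..J. (A - h j) * y j)"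
          by (rule sum.cong) (auto simp: g_def)
        ultimately show ?thesis using sum_split_at[OF Jnp, of "\<lambda>j. (g j - h j) * y j"] by simp
      qed
      ultimately show ?thesis using yv by simp
    qed
    have "(\<Sum>j=1..np. ys j powr p + p * (t powr (p-1) * g j) * (y j - ys j)) \<le> (\<Sum>j=1..np. y j powr p)"
      using tang by (intro sum_mono) auto
    moreover have "(\<Sum>j=1..np. ys j powr p + p * (t powr (p-1) * g j) * (y j - ys j))
       = objective \<alpha> np ys + p * t powr (p-1) * ((\<Sum>j=1..np. g j * y j) - (\<Sum>j=1..np. g j * ys j))"
      unfolding objective_def p_def[symmetric]
      by (simp add: sum.distrib sum_distrib_left sum_subtractf algebra_simps)
    moreover have "0 \<le> p * t powr (p-1) * ((\<Sum>j=1..np. g j * y j) - (\<Sum>j=1..np. g j * ys j))"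
      using gy gy2 abel p1 by simp
    ultimately show ?thesis using obj_ys val2 unfolding objective_def p_def by simp
  qed
  show ?thesis using ys_feas obj_ys val2 lower by auto
qed

end
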